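(* For integers $p,q\ge 3$ with $p\mid q$, let $u_{q,p}:\mathbf{mGT}_q\to\mathbf{mGT}_p$ be the homomorphism sending $g\in\mathbf{mGT}_q$ to the unique permutation $u_{q,p}(g)$ of $\mathbb{Z}/p\mathbb{Z}$ satisfying $t_{q,p}\circ g=u_{q,p}(g)\circ t_{q,p}$, where $t_{q,p}:\mathbb{Z}/q\mathbb{Z}\to\mathbb{Z}/p\mathbb{Z}$ is reduction mod $p$. Then the groups $\mathbf{mGT}_q$ ($q\ge3$) together with the homomorphisms $u_{q,p}$ (for $p\mid q$) form a projective system indexed by the integers $\ge 3$ ordered by divisibility, and hence there exists a well-defined group $\mathbf{mGT}=\varprojlim_q \mathbf{mGT}_q$, the projective limit of the groups $\mathbf{mGT}_q$ with respect to the homomorphisms $u_{q,p}$.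
   Context: For an integer $q\ge 3$, $\mathbf{mGT}_q$ is the subgroup of the group of permutations of $\mathbb{Z}/q\mathbb{Z}$ generated by the multiplications $a\mapsto da$ for $d\in(\mathbb{Z}/q\mathbb{Z})^*$ (residues coprime to $q$) and the involution $\theta_q:a\mapsto 1-a$. The group $\mathbf{mGT}$ is called by the paper the modified profinite Grothendieck–Teichmüller group. *)

theory Defs
  imports "HOL-Algebra.Algebra" "HOL-Number_Theory.Number_Theory"
begin

text \<open>Z/qZ is modelled by the residues {..<q} (natural numbers); permutations of
  Z/qZ are the elements of Bij {..<q} (extensional bijections), forming BijGroup.\<close>

definition mult_map :: "nat \<Rightarrow> nat \<Rightarrow> (nat \<Rightarrow> nat)" where
  "mult_map q d = (\<lambda>a\<in>{..<q}. (d * a) mod q)"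

definition theta :: "nat \<Rightarrow> (nat \<Rightarrow> nat)" where
  "theta q = (\<lambda>a\<in>{..<q}. (q + 1 - a) mod q)"

definition mGT_gens :: "nat \<Rightarrow> (nat \<Rightarrow> nat) set" where
  "mGT_gens q = {mult_map q d | d. d < q \<and> coprime d q} \<union> {theta q}"

definition mGT :: "nat \<Rightarrow> (nat \<Rightarrow> nat) monoid" where
  "mGT q = (BijGroup {..<q}) \<lparr> carrier := generate (BijGroup {..<q}) (mGT_gens q) \<rparr>"

definition u :: "nat \<Rightarrow> nat \<Rightarrow> (nat \<Rightarrow> nat) \<Rightarrow> (nat \<Rightarrow> nat)" where
  "u q p g = (THE h. h \<in> Bij {..<p} \<and> (\<forall>a<q. g a mod p = h (a mod p)))"

definition mGT_lim_carrier :: "(nat \<Rightarrow> (nat \<Rightarrow> nat)) set" where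
  "mGT_lim_carrier = {f. (\<forall>q. 3 \<le> q \<longrightarrow> f q \<in> carrier (mGT q))
                      \<and> (\<forall>q p. 3 \<le> p \<and> 3 \<le> q \<and> p dvd q \<longrightarrow> u q p (f q) = f p)
                      \<and> (\<forall>q. q < 3 \<longrightarrow> f q = undefined)}"

definition mGT_lim :: "(nat \<Rightarrow> (nat \<Rightarrow> nat)) monoid" where
  "mGT_lim = \<lparr> carrier = mGT_lim_carrier,
              monoid.mult = (\<lambda>f g q. if 3 \<le> q then f q \<otimes>\<^bsub>mGT q\<^esub> g q else undefined),
              one = (\<lambda>q. if 3 \<le> q then \<one>\<^bsub>mGT q\<^esub> else undefined) \<rparr>"

end

theory Submission
  imports Defs
begin

definition cmp :: "nat \<Rightarrow> nat \<Rightarrow> (nat \<Rightarrow> nat) \<Rightarrow> bool" where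
  "cmp q p g = (\<forall>a<q. g a mod p = g (a mod p) mod p)"

definition ind :: "nat \<Rightarrow> (nat \<Rightarrow> nat) \<Rightarrow> (nat \<Rightarrow> nat)" where
  "ind p g = (\<lambda>b\<in>{..<p}. g b mod p)"

lemma ind_Bij:
  assumes g: "g \<in> Bij {..<q}" and c: "cmp q p g" and p: "0 < p" "p \<le> q"
  shows "ind p g \<in> Bij {..<p}"
proof -
  have bg: "bij_betw g {..<q} {..<q}" using g by (simp add: Bij_def)
  have img: "ind p g ` {..<p} = {..<p}"
  proof
    show "ind p g ` {..<p} \<subseteq> {..<p}" using p by (auto simp: ind_def)
    show "{..<p} \<subseteq> ind p g ` {..<p}"
    proof
      fix c0 assume c0: "c0 \<in> {..<p}"
      then have "c0 \<in> {..<q}" using p by auto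
      then obtain a where a: "a < q" "g a = c0" using bg by (metis bij_betw_def imageE lessThan_iff)
      have "a mod p < p" using p by simp
      moreover have "ind p g (a mod p) = c0"
        using a c c0 p unfolding ind_def cmp_def by auto
      ultimately show "c0 \<in> ind p g ` {..<p}" by force
    qed
  qed
  have "inj_on (ind p g) {..<p}"
    by (rule eq_card_imp_inj_on) (auto simp: img)
  then show ?thesis using img by (simp add: Bij_def bij_betw_def ind_def)
qed

lemma u_char:
  assumes g: "g \<in> Bij {..<q}" and c: "cmp q p g" and p: "0 < p" "p \<le> q"
  shows "(h \<in> Bij {..<p} \<and> (\<forall>a<q. g a mod p = h (a mod p))) \<longleftrightarrow> h = ind p g"
proof
  assume h: "h \<in> Bij {..<p} \<and> (\<forall>a<q. g a mod p = h (a mod p))"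
  show "h = ind p g"
  proof
    fix b show "h b = ind p g b"
    proof (cases "b < p")
      case True
      then show ?thesis using h p by (force simp: ind_def)
    next
      case False
      then show ?thesis using h by (auto simp: ind_def Bij_def extensional_def)
    qed
  qed
next
  assume "h = ind p g"
  then show "h \<in> Bij {..<p} \<and> (\<forall>a<q. g a mod p = h (a mod p))"
    using ind_Bij[OF assms] c p by (auto simp: ind_def cmp_def)
qed

lemma u_eq:
  assumes "g \<in> Bij {..<q}" "cmp q p g" "0 < p" "p \<le> q"
  shows "u q p g = ind p g"
    and "\<exists>!h. h \<in> Bij {..<p} \<and> (\<forall>a<q. g a mod p = h (a mod p))"
  using u_char[OF assms] by (auto simp: u_def)

lemma mult_Bij: "x \<in> Bij S \<Longrightarrow> y \<in> Bij S \<Longrightarrow> x \<otimes>\<^bsub>BijGroup S\<^esub> y = compose S x y"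
  by (simp add: BijGroup_def)

lemma cmp_mult:
  assumes "g \<in> Bij {..<q}" "h \<in> Bij {..<q}" "cmp q p g" "cmp q p h" "0 < p" "p \<le> q"
  shows "cmp q p (g \<otimes>\<^bsub>BijGroup {..<q}\<^esub> h)"
proof -
  have hq: "\<And>a. a < q \<Longrightarrow> h a < q" using assms(2) Bij_imp_funcset by fastforce
  show ?thesis
  unfolding cmp_def mult_Bij[OF assms(1,2)] compose_def
  proof (intro allI impI)
    fix a assume a: "a < q"
    have am: "a mod p < q" using assms(5,6) by (meson order_less_le_trans mod_less_divisor)
    have "g (h a) mod p = g (h a mod p) mod p" using assms(3) hq[OF a] by (simp add: cmp_def)
    also have "\<dots> = g (h (a mod p) mod p) mod p" using assms(4) a by (simp add: cmp_def)
    also have "\<dots> = g (h (a mod p)) mod p" using assms(3) hq[OF am] by (simp add: cmp_def)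
    finally show "(\<lambda>x\<in>{..<q}. g (h x)) a mod p = (\<lambda>x\<in>{..<q}. g (h x)) (a mod p) mod p"
      using a am by simp
  qed
qed

lemma cmp_inv:
  assumes g: "g \<in> Bij {..<q}" and c: "cmp q p g" and p: "0 < p" "p \<le> q"
  shows "cmp q p (inv\<^bsub>BijGroup {..<q}\<^esub> g)"
proof -
  have bg: "bij_betw g {..<q} {..<q}" using g by (simp add: Bij_def)
  have inj: "inj_on (ind p g) {..<p}" using ind_Bij[OF assms] by (simp add: Bij_def bij_betw_def)
  show ?thesis unfolding inv_BijGroup[OF g] cmp_def
  proof (intro allI impI)
    fix a assume a: "a < q"
    have am: "a mod p < q" using p by (meson order_less_le_trans mod_less_divisor)
    define x where "x = inv_into {..<q} g a"
    define y where "y = inv_into {..<q} g (a mod p)"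
    have x: "x < q" "g x = a" using a bg unfolding x_def bij_betw_def
      by (metis f_inv_into_f inv_into_into lessThan_iff)+
    have y: "y < q" "g y = a mod p" using am bg unfolding y_def bij_betw_def
      by (metis f_inv_into_f inv_into_into lessThan_iff)+
    have "ind p g (x mod p) = a mod p" using x c p unfolding ind_def cmp_def by (metis lessThan_iff mod_less_divisor restrict_apply')
    moreover have "ind p g (y mod p) = a mod p" using y c p unfolding ind_def cmp_def by (metis lessThan_iff mod_less_divisor restrict_apply' mod_mod_trivial)
    ultimately have "x mod p = y mod p" using inj p by (auto simp: inj_on_def)
    then show "(\<lambda>x\<in>{..<q}. inv_into {..<q} g x) a mod p =
          (\<lambda>x\<in>{..<q}. inv_into {..<q} g x) (a mod p) mod p"
      using a am x_def y_def by simp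
  qed
qed

lemma ind_mult:
  assumes "g \<in> Bij {..<q}" "h \<in> Bij {..<q}" "cmp q p g" "cmp q p h" "0 < p" "p \<le> q"
  shows "ind p (g \<otimes>\<^bsub>BijGroup {..<q}\<^esub> h) = ind p g \<otimes>\<^bsub>BijGroup {..<p}\<^esub> ind p h"
proof -
  have hq: "\<And>a. a < q \<Longrightarrow> h a < q" using assms(2) Bij_imp_funcset by fastforce
  have ig: "ind p g \<in> Bij {..<p}" "ind p h \<in> Bij {..<p}" using ind_Bij assms by auto
  show ?thesis unfolding mult_Bij[OF assms(1,2)] mult_Bij[OF ig]
  proof
    fix b show "ind p (compose {..<q} g h) b = compose {..<p} (ind p g) (ind p h) b"
    proof (cases "b < p")
      case True
      then have bq: "b < q" using assms by simp
      have hp: "h b mod p < p" using assms by simp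
      show ?thesis using True bq hp assms(3) hq[OF bq] by (simp add: ind_def compose_def cmp_def)
    qed (simp add: ind_def compose_def)
  qed
qed

lemma mm_Bij: assumes "0 < q" "coprime d q" shows "mult_map q d \<in> Bij {..<q}"
proof -
  have inj: "inj_on (mult_map q d) {..<q}"
  proof (rule inj_onI)
    fix a b assume ab: "a \<in> {..<q}" "b \<in> {..<q}" "mult_map q d a = mult_map q d b"
    then have "d * a mod q = d * b mod q" by (simp add: mult_map_def)
    then have "a mod q = b mod q" using cong_mult_lcancel_nat[of d q a b] assms(2) unfolding cong_def by simp
    then show "a = b" using ab by simp
  qed
  have sub: "mult_map q d ` {..<q} \<subseteq> {..<q}" using assms by (auto simp: mult_map_def)
  have "mult_map q d ` {..<q} = {..<q}" by (rule endo_inj_surj[OF _ sub inj]) simp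
  then show ?thesis using inj by (simp add: Bij_def bij_betw_def mult_map_def)
qed

lemma theta_inv: assumes "a < q" shows "theta q (theta q a) = a"
proof -
  have t: "\<And>x. x < q \<Longrightarrow> theta q x = (q + 1 - x) mod q" by (simp add: theta_def)
  consider "a = 0" | "a = 1" | "a \<ge> 2" by linarith
  then show ?thesis
  proof cases
    case 1
    then show ?thesis using assms t
      by (cases "q = 1") (auto simp: mod_if)
  next
    case 2
    then show ?thesis using assms t by (auto simp: mod_if)
  next
    case 3
    then have "theta q a = q + 1 - a" using assms t by (simp add: mod_if)
    then show ?thesis using assms t 3 by (simp add: mod_if)
  qed
qed

lemma theta_Bij: assumes "0 < q" shows "theta q \<in> Bij {..<q}"
proof -
  have sub: "theta q ` {..<q} \<subseteq> {..<q}" using assms by (auto simp: theta_def)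
  have inj: "inj_on (theta q) {..<q}" by (rule inj_on_inverseI[of _ "theta q"]) (simp add: theta_inv)
  have "theta q ` {..<q} = {..<q}" by (rule endo_inj_surj[OF _ sub inj]) simp
  then show ?thesis using inj by (simp add: Bij_def bij_betw_def theta_def)
qed

lemma cmp_mm: assumes "p dvd q" "0 < p" shows "cmp q p (mult_map q d)"
  unfolding cmp_def
proof (intro allI impI)
  fix a assume a: "a < q"
  have "a mod p < q" using a by (meson le_less_trans mod_less_eq_dividend)
  then show "mult_map q d a mod p = mult_map q d (a mod p) mod p"
    using a assms unfolding mult_map_def by (simp add: mod_mod_cancel mod_mult_right_eq)
qed

lemma diff_mod_lemma:
  fixes x a b :: nat
  assumes "a \<le> x" "b \<le> x" "a mod p = b mod p"
  shows "(x - a) mod p = (x - b) mod p"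
  using cong_diff_nat[of x x p a b] assms unfolding cong_def by simp

lemma cmp_theta: assumes "p dvd q" "0 < p" shows "cmp q p (theta q)"
  unfolding cmp_def
proof (intro allI impI)
  fix a assume a: "a < q"
  have pq: "p \<le> q" using assms a by (simp add: dvd_imp_le)
  have am: "a mod p < q" using pq assms(2) by (meson order_less_le_trans mod_less_divisor)
  have "theta q a mod p = (q + 1 - a) mod p" using a assms by (simp add: theta_def mod_mod_cancel)
  also have "\<dots> = (q + 1 - a mod p) mod p"
    using a by (intro diff_mod_lemma) (auto intro: le_trans[OF mod_less_eq_dividend])
  also have "\<dots> = theta q (a mod p) mod p" using am assms by (simp add: theta_def mod_mod_cancel)
  finally show "theta q a mod p = theta q (a mod p) mod p" .
qed

lemma ind_mm: assumes "p dvd q" "0 < p" "0 < q" shows "ind p (mult_map q d) = mult_map p (d mod p)"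
proof
  fix b
  show "ind p (mult_map q d) b = mult_map p (d mod p) b"
  proof (cases "b < p")
    case True
    have pq: "p \<le> q" using assms by (simp add: dvd_imp_le)
    have bq: "b < q" using True pq by simp
    have "ind p (mult_map q d) b = d * b mod q mod p" using True bq by (simp add: ind_def mult_map_def)
    also have "\<dots> = d * b mod p" using assms(1) by (rule mod_mod_cancel)
    also have "\<dots> = (d mod p) * b mod p" by (rule mod_mult_left_eq[symmetric])
    also have "\<dots> = mult_map p (d mod p) b" using True by (simp add: mult_map_def)
    finally show ?thesis .
  next
    case False
    then show ?thesis by (simp add: ind_def mult_map_def)
  qed
qed

lemma ind_theta: assumes "p dvd q" "0 < p" "0 < q" shows "ind p (theta q) = theta p"
proof
  fix b
  show "ind p (theta q) b = theta p b"
  proof (cases "b < p")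
    case True
    have pq: "p \<le> q" using assms by (simp add: dvd_imp_le)
    have bq: "b < q" using True pq by simp
    have q1: "q + 1 - b = (p + 1 - b) + (q - p)" using pq True by simp
    have "p dvd q - p" using assms(1) by (simp add: dvd_diff_nat)
    then obtain m where m: "q - p = p * m" by (elim dvdE)
    have "(q + 1 - b) mod p = (p + 1 - b) mod p" unfolding q1 m by simp
    moreover have "ind p (theta q) b = (q + 1 - b) mod p"
      using True bq assms by (simp add: ind_def theta_def mod_mod_cancel)
    moreover have "theta p b = (p + 1 - b) mod p" using True by (simp add: theta_def)
    ultimately show ?thesis by simp
  next
    case False
    then show ?thesis by (simp add: ind_def theta_def)
  qed
qed

lemma gens_props0:
  assumes "g \<in> mGT_gens q" "p dvd q" "0 < p" "0 < q"
  shows "g \<in> Bij {..<q} \<and> cmp q p g \<and> ind p g \<in> mGT_gens p"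
proof -
  have cop: "coprime d q \<Longrightarrow> coprime (d mod p) p" for d
    using assms(2,3) by (metis coprime_mod_left_iff coprime_mult_right_iff dvd_def neq0_conv)
  consider d where "d < q" "coprime d q" "g = mult_map q d" | "g = theta q"
    using assms(1) unfolding mGT_gens_def by blast
  then show ?thesis
  proof cases
    case 1
    have a: "g \<in> Bij {..<q}" using 1 mm_Bij assms(4) by simp
    have b: "cmp q p g" using 1 cmp_mm assms(2,3) by simp
    have "d mod p < p" "coprime (d mod p) p" using assms(3) cop 1 by auto
    then have "ind p g \<in> mGT_gens p" using 1 ind_mm[OF assms(2,3,4)] unfolding mGT_gens_def by blast
    then show ?thesis using a b by blast
  next
    case 2
    have a: "g \<in> Bij {..<q}" using 2 theta_Bij assms(4) by simp
    have b: "cmp q p g" using 2 cmp_theta assms(2,3) by simp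
    have "ind p g \<in> mGT_gens p" using 2 ind_theta[OF assms(2,3,4)] unfolding mGT_gens_def by blast
    then show ?thesis using a b by blast
  qed
qed

lemmas gens_props = gens_props0[THEN conjunct1] gens_props0[THEN conjunct2, THEN conjunct1]
  gens_props0[THEN conjunct2, THEN conjunct2]

lemma BijG_simps: "carrier (BijGroup S) = Bij S" "\<one>\<^bsub>BijGroup S\<^esub> = (\<lambda>x\<in>S. x)"
  by (simp_all add: BijGroup_def)

lemma gen_props:
  assumes "g \<in> generate (BijGroup {..<q}) (mGT_gens q)" "p dvd q" "0 < p" "0 < q"
  shows "g \<in> Bij {..<q} \<and> cmp q p g \<and> ind p g \<in> generate (BijGroup {..<p}) (mGT_gens p)"
  using assms(1)
proof (induction rule: generate.induct)
  case one
  have e: "\<one>\<^bsub>BijGroup {..<q}\<^esub> = (\<lambda>x\<in>{..<q}. x)" by (simp add: BijG_simps)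
  have i1: "ind p (\<lambda>x\<in>{..<q}. x) = (\<lambda>x\<in>{..<p}. x)"
  proof
    fix b show "ind p (\<lambda>x\<in>{..<q}. x) b = (\<lambda>x\<in>{..<p}. x) b"
    proof (cases "b < p")
      case True
      then have "b < q" using assms dvd_imp_le[of p q] by simp
      then show ?thesis using True by (simp add: ind_def)
    next
      case False
      then show ?thesis by (simp add: ind_def)
    qed
  qed
  have c2: "cmp q p (\<lambda>x\<in>{..<q}. x)" unfolding cmp_def
  proof (intro allI impI)
    fix a assume a: "a < q"
    have "a mod p < q" using a by (meson le_less_trans mod_less_eq_dividend)
    then show "(\<lambda>x\<in>{..<q}. x) a mod p = (\<lambda>x\<in>{..<q}. x) (a mod p) mod p" using a by simp
  qed
  have g3: "(\<lambda>x\<in>{..<p}. x) \<in> generate (BijGroup {..<p}) (mGT_gens p)"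
    using generate.one[of "BijGroup {..<p}" "mGT_gens p"] by (simp only: BijG_simps)
  show ?case unfolding e i1 by (intro conjI id_Bij c2 g3)
next
  case (incl h)
  have h: "h \<in> Bij {..<q}" "cmp q p h" "ind p h \<in> mGT_gens p"
    using gens_props[OF incl assms(2-4)] by auto
  show ?case by (intro conjI h(1,2) generate.incl[OF h(3)])
next
  case (inv h)
  have pq: "p \<le> q" using assms by (simp add: dvd_imp_le)
  have h: "h \<in> Bij {..<q}" "cmp q p h" "ind p h \<in> mGT_gens p" using gens_props[OF inv assms(2-4)] by auto
  interpret G: group "BijGroup {..<q}" by (rule group_BijGroup)
  interpret P: group "BijGroup {..<p}" by (rule group_BijGroup)
  have ih: "inv\<^bsub>BijGroup {..<q}\<^esub> h \<in> Bij {..<q}" using h G.inv_closed by (simp add: BijG_simps)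
  have ci: "cmp q p (inv\<^bsub>BijGroup {..<q}\<^esub> h)" using cmp_inv h assms pq by simp
  have "ind p (inv\<^bsub>BijGroup {..<q}\<^esub> h) \<otimes>\<^bsub>BijGroup {..<p}\<^esub> ind p h
      = ind p (inv\<^bsub>BijGroup {..<q}\<^esub> h \<otimes>\<^bsub>BijGroup {..<q}\<^esub> h)"
    using ind_mult[OF ih h(1) ci h(2) assms(3) pq] by simp
  also have "\<dots> = ind p (\<lambda>x\<in>{..<q}. x)" using h G.l_inv by (simp add: BijG_simps)
  also have "\<dots> = (\<lambda>x\<in>{..<p}. x)"
  proof
    fix b show "ind p (\<lambda>x\<in>{..<q}. x) b = (\<lambda>x\<in>{..<p}. x) b"
    proof (cases "b < p")
      case True
      then have "b < q" using pq by simp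
      then show ?thesis using True by (simp add: ind_def)
    next
      case False
      then show ?thesis by (simp add: ind_def)
    qed
  qed
  finally have "inv\<^bsub>BijGroup {..<p}\<^esub> (ind p h) = ind p (inv\<^bsub>BijGroup {..<q}\<^esub> h)"
    using P.inv_equality ind_Bij[OF h(1,2) assms(3) pq] ind_Bij[OF ih ci assms(3) pq]
    by (simp add: BijG_simps)
  then have "ind p (inv\<^bsub>BijGroup {..<q}\<^esub> h) \<in> generate (BijGroup {..<p}) (mGT_gens p)"
    using generate.inv[OF h(3), of "BijGroup {..<p}"] by simp
  then show ?case using ih ci by simp
next
  case (eng h1 h2)
  have pq: "p \<le> q" using assms by (simp add: dvd_imp_le)
  interpret G: group "BijGroup {..<q}" by (rule group_BijGroup)
  have a: "h1 \<otimes>\<^bsub>BijGroup {..<q}\<^esub> h2 \<in> Bij {..<q}" using eng G.m_closed by (simp add: BijG_simps)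
  have b: "cmp q p (h1 \<otimes>\<^bsub>BijGroup {..<q}\<^esub> h2)" using eng cmp_mult assms pq by simp
  have "ind p (h1 \<otimes>\<^bsub>BijGroup {..<q}\<^esub> h2) = ind p h1 \<otimes>\<^bsub>BijGroup {..<p}\<^esub> ind p h2"
    using eng ind_mult assms pq by simp
  then show ?case using a b eng generate.eng by metis
qed

lemma carrier_mGT: "carrier (mGT q) = generate (BijGroup {..<q}) (mGT_gens q)"
  by (simp add: mGT_def)

lemma mult_mGT: "x \<otimes>\<^bsub>mGT q\<^esub> y = x \<otimes>\<^bsub>BijGroup {..<q}\<^esub> y"
  by (simp add: mGT_def)

lemma group_mGT: assumes "0 < q" shows "group (mGT q)"
proof -
  have "mGT_gens q \<subseteq> carrier (BijGroup {..<q})"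
    using gens_props(1)[OF _ dvd_refl assms assms] by (auto simp: BijG_simps)
  then have "subgroup (generate (BijGroup {..<q}) (mGT_gens q)) (BijGroup {..<q})"
    by (rule group.generate_is_subgroup[OF group_BijGroup])
  then show ?thesis unfolding mGT_def by (rule subgroup.subgroup_is_group[OF _ group_BijGroup])
qed

lemma props_mGT:
  assumes "g \<in> carrier (mGT q)" "p dvd q" "0 < p" "0 < q"
  shows "g \<in> Bij {..<q}" "cmp q p g" "u q p g = ind p g" "u q p g \<in> carrier (mGT p)"
    "\<exists>!h. h \<in> Bij {..<p} \<and> (\<forall>a<q. g a mod p = h (a mod p))"
proof -
  have pq: "p \<le> q" using assms by (simp add: dvd_imp_le)
  have A: "g \<in> Bij {..<q} \<and> cmp q p g \<and> ind p g \<in> generate (BijGroup {..<p}) (mGT_gens p)"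
    using gen_props assms by (simp add: carrier_mGT)
  then show "g \<in> Bij {..<q}" "cmp q p g" by auto
  show "u q p g = ind p g" "\<exists>!h. h \<in> Bij {..<p} \<and> (\<forall>a<q. g a mod p = h (a mod p))"
    using u_eq A assms pq by auto
  then show "u q p g \<in> carrier (mGT p)" using A by (simp add: carrier_mGT)
qed

lemma hom_u:
  assumes "p dvd q" "0 < p" "0 < q"
  shows "u q p \<in> hom (mGT q) (mGT p)"
proof (rule homI)
  fix x assume "x \<in> carrier (mGT q)"
  then show "u q p x \<in> carrier (mGT p)" using props_mGT assms by blast
next
  fix x y assume xy: "x \<in> carrier (mGT q)" "y \<in> carrier (mGT q)"
  have pq: "p \<le> q" using assms by (simp add: dvd_imp_le)
  interpret G: group "mGT q" using group_mGT assms by simp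
  have xyc: "x \<otimes>\<^bsub>mGT q\<^esub> y \<in> carrier (mGT q)" using xy by simp
  have "u q p (x \<otimes>\<^bsub>mGT q\<^esub> y) = ind p (x \<otimes>\<^bsub>BijGroup {..<q}\<^esub> y)"
    using props_mGT(3)[OF xyc assms] by (simp add: mult_mGT)
  also have "\<dots> = ind p x \<otimes>\<^bsub>BijGroup {..<p}\<^esub> ind p y"
    using ind_mult props_mGT(1,2)[OF xy(1) assms] props_mGT(1,2)[OF xy(2) assms] assms pq by simp
  finally show "u q p (x \<otimes>\<^bsub>mGT q\<^esub> y) = u q p x \<otimes>\<^bsub>mGT p\<^esub> u q p y"
    using props_mGT(3)[OF xy(1) assms] props_mGT(3)[OF xy(2) assms] by (simp add: mult_mGT)
qed

lemma group_hom_u: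
  assumes "p dvd q" "0 < p" "0 < q"
  shows "group_hom (mGT q) (mGT p) (u q p)"
  using hom_u[OF assms] group_mGT assms by (simp add: group_hom_def group_hom_axioms_def)

lemma lim_simps:
  "carrier mGT_lim = mGT_lim_carrier"
  "f \<otimes>\<^bsub>mGT_lim\<^esub> g = (\<lambda>q. if 3 \<le> q then f q \<otimes>\<^bsub>mGT q\<^esub> g q else undefined)"
  "\<one>\<^bsub>mGT_lim\<^esub> = (\<lambda>q. if 3 \<le> q then \<one>\<^bsub>mGT q\<^esub> else undefined)"
  by (simp_all add: mGT_lim_def)

lemma ghu: "3 \<le> p \<Longrightarrow> 3 \<le> q \<Longrightarrow> p dvd q \<Longrightarrow> group_hom (mGT q) (mGT p) (u q p)"
  by (rule group_hom_u) auto

lemma gm: "3 \<le> q \<Longrightarrow> group (mGT q)"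
  by (rule group_mGT) auto

lemma group_lim: "group mGT_lim"
proof (rule groupI)
  fix x y assume xy: "x \<in> carrier mGT_lim" "y \<in> carrier mGT_lim"
  show "x \<otimes>\<^bsub>mGT_lim\<^esub> y \<in> carrier mGT_lim"
    unfolding lim_simps mGT_lim_carrier_def
  proof (intro CollectI conjI allI impI)
    fix q :: nat assume q: "3 \<le> q"
    show "(if 3 \<le> q then x q \<otimes>\<^bsub>mGT q\<^esub> y q else undefined) \<in> carrier (mGT q)"
      using xy q monoid.m_closed[OF group.is_monoid[OF gm[OF q]]] by (simp add: lim_simps mGT_lim_carrier_def)
  next
    fix q p :: nat assume a: "3 \<le> p \<and> 3 \<le> q \<and> p dvd q"
    interpret H: group_hom "mGT q" "mGT p" "u q p" using ghu a by simp
    show "u q p (if 3 \<le> q then x q \<otimes>\<^bsub>mGT q\<^esub> y q else undefined) =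
          (if 3 \<le> p then x p \<otimes>\<^bsub>mGT p\<^esub> y p else undefined)"
      using xy a by (simp add: lim_simps mGT_lim_carrier_def)
  next
    fix q :: nat assume "q < 3"
    then show "(if 3 \<le> q then x q \<otimes>\<^bsub>mGT q\<^esub> y q else undefined) = undefined" by simp
  qed
next
  show "\<one>\<^bsub>mGT_lim\<^esub> \<in> carrier mGT_lim"
    unfolding lim_simps mGT_lim_carrier_def
  proof (intro CollectI conjI allI impI)
    fix q :: nat assume q: "3 \<le> q"
    show "(if 3 \<le> q then \<one>\<^bsub>mGT q\<^esub> else undefined) \<in> carrier (mGT q)"
      using q monoid.one_closed[OF group.is_monoid[OF gm[OF q]]] by simp
  next
    fix q p :: nat assume a: "3 \<le> p \<and> 3 \<le> q \<and> p dvd q"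
    interpret H: group_hom "mGT q" "mGT p" "u q p" using ghu a by simp
    show "u q p (if 3 \<le> q then \<one>\<^bsub>mGT q\<^esub> else undefined) =
          (if 3 \<le> p then \<one>\<^bsub>mGT p\<^esub> else undefined)"
      using a by simp
  next
    fix q :: nat assume "q < 3"
    then show "(if 3 \<le> q then \<one>\<^bsub>mGT q\<^esub> else undefined) = undefined" by simp
  qed
next
  fix x y z assume xyz: "x \<in> carrier mGT_lim" "y \<in> carrier mGT_lim" "z \<in> carrier mGT_lim"
  show "x \<otimes>\<^bsub>mGT_lim\<^esub> y \<otimes>\<^bsub>mGT_lim\<^esub> z = x \<otimes>\<^bsub>mGT_lim\<^esub> (y \<otimes>\<^bsub>mGT_lim\<^esub> z)"
  proof
    fix q show "(x \<otimes>\<^bsub>mGT_lim\<^esub> y \<otimes>\<^bsub>mGT_lim\<^esub> z) q = (x \<otimes>\<^bsub>mGT_lim\<^esub> (y \<otimes>\<^bsub>mGT_lim\<^esub> z)) q"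
    proof (cases "3 \<le> q")
      case True
      then show ?thesis using xyz monoid.m_assoc[OF group.is_monoid[OF gm[OF True]]]
        by (simp add: lim_simps mGT_lim_carrier_def)
    qed (simp add: lim_simps)
  qed
next
  fix x assume x: "x \<in> carrier mGT_lim"
  show "\<one>\<^bsub>mGT_lim\<^esub> \<otimes>\<^bsub>mGT_lim\<^esub> x = x"
  proof
    fix q show "(\<one>\<^bsub>mGT_lim\<^esub> \<otimes>\<^bsub>mGT_lim\<^esub> x) q = x q"
    proof (cases "3 \<le> q")
      case True
      then show ?thesis using x monoid.l_one[OF group.is_monoid[OF gm[OF True]]]
        by (simp add: lim_simps mGT_lim_carrier_def)
    next
      case False
      then show ?thesis using x by (simp add: lim_simps mGT_lim_carrier_def)
    qed
  qed
next
  fix x assume x: "x \<in> carrier mGT_lim"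
  define y where "y = (\<lambda>q. if 3 \<le> q then inv\<^bsub>mGT q\<^esub> (x q) else undefined)"
  have "y \<in> carrier mGT_lim"
    unfolding lim_simps mGT_lim_carrier_def
  proof (intro CollectI conjI allI impI)
    fix q :: nat assume q: "3 \<le> q"
    show "y q \<in> carrier (mGT q)"
      using x q group.inv_closed[OF gm[OF q]] by (simp add: y_def lim_simps mGT_lim_carrier_def)
  next
    fix q p :: nat assume a: "3 \<le> p \<and> 3 \<le> q \<and> p dvd q"
    interpret H: group_hom "mGT q" "mGT p" "u q p" using ghu a by simp
    show "u q p (y q) = y p"
      using x a by (simp add: y_def lim_simps mGT_lim_carrier_def)
  next
    fix q :: nat assume "q < 3"
    then show "y q = undefined" by (simp add: y_def)
  qed
  moreover have "y \<otimes>\<^bsub>mGT_lim\<^esub> x = \<one>\<^bsub>mGT_lim\<^esub>"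
  proof
    fix q show "(y \<otimes>\<^bsub>mGT_lim\<^esub> x) q = \<one>\<^bsub>mGT_lim\<^esub> q"
    proof (cases "3 \<le> q")
      case True
      then show ?thesis using x group.l_inv[OF gm[OF True]]
        by (simp add: y_def lim_simps mGT_lim_carrier_def)
    qed (simp add: lim_simps)
  qed
  ultimately show "\<exists>y\<in>carrier mGT_lim. y \<otimes>\<^bsub>mGT_lim\<^esub> x = \<one>\<^bsub>mGT_lim\<^esub>" by blast
qed

theorem corollary6p4:
  shows "(\<forall>q p. 3 \<le> p \<and> 3 \<le> q \<and> p dvd q \<longrightarrow>
            (\<forall>g \<in> carrier (mGT q). \<exists>!h. h \<in> Bij {..<p} \<and> (\<forall>a<q. g a mod p = h (a mod p)))
          \<and> u q p \<in> hom (mGT q) (mGT p))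
       \<and> (\<forall>q. 3 \<le> q \<longrightarrow> (\<forall>g \<in> carrier (mGT q). u q q g = g))
       \<and> (\<forall>q p r. 3 \<le> r \<and> 3 \<le> p \<and> 3 \<le> q \<and> r dvd p \<and> p dvd q \<longrightarrow>
            (\<forall>g \<in> carrier (mGT q). u p r (u q p g) = u q r g))
       \<and> group mGT_lim"
proof (intro conjI allI impI ballI)
  fix q p :: nat and g assume a: "3 \<le> p \<and> 3 \<le> q \<and> p dvd q" and g: "g \<in> carrier (mGT q)"
  show "\<exists>!h. h \<in> Bij {..<p} \<and> (\<forall>a<q. g a mod p = h (a mod p))"
    using props_mGT(5)[OF g] a by simp
next
  fix q p :: nat assume a: "3 \<le> p \<and> 3 \<le> q \<and> p dvd q"
  show "u q p \<in> hom (mGT q) (mGT p)" using hom_u a by simp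
next
  fix q :: nat and g assume q: "3 \<le> q" and g: "g \<in> carrier (mGT q)"
  have q0: "0 < q" using q by simp
  have gB: "g \<in> Bij {..<q}" and ue: "u q q g = ind q g"
    using props_mGT[OF g dvd_refl q0 q0] by auto
  show "u q q g = g" unfolding ue
  proof
    fix b show "ind q g b = g b"
    proof (cases "b < q")
      case True
      then have "g b < q" using gB Bij_imp_funcset by fastforce
      then show ?thesis using True by (simp add: ind_def)
    next
      case False
      then show ?thesis using gB by (simp add: ind_def Bij_def extensional_def)
    qed
  qed
next
  fix q p r :: nat and g assume a: "3 \<le> r \<and> 3 \<le> p \<and> 3 \<le> q \<and> r dvd p \<and> p dvd q"
    and g: "g \<in> carrier (mGT q)"
  have pos: "0 < p" "0 < q" "0 < r" using a by auto
  have rq: "r dvd q" using a dvd_trans by blast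
  have pq: "p \<le> q" and rp: "r \<le> p" using a pos by (simp_all add: dvd_imp_le)
  have h: "u q p g \<in> carrier (mGT p)" "u q p g = ind p g" using props_mGT[OF g _ pos(1,2)] a by auto
  have e1: "u p r (u q p g) = ind r (ind p g)" using props_mGT(3)[OF h(1) _ pos(3,1)] a h(2) by simp
  have e2: "u q r g = ind r g" using props_mGT(3)[OF g rq pos(3,2)] .
  show "u p r (u q p g) = u q r g" unfolding e1 e2
  proof
    fix b show "ind r (ind p g) b = ind r g b"
    proof (cases "b < r")
      case True
      then have "b < p" using rp by simp
      then show ?thesis using True a by (simp add: ind_def mod_mod_cancel)
    next
      case False
      then show ?thesis by (simp add: ind_def)
    qed
  qed
next
  show "group mGT_lim" by (rule group_lim)
qed

end
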